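(* For $k=1,\dots,N-1$: (1) $Z^jV_k=V_{k+j}$ for $j=1,\dots,N-k-1$; moreover $Z^kV=\bigoplus_{j=k+1}^{N}V_j$ and $V=\bigoplus_{j=0}^{N-1}Z^jV_1$; (2) $Z_k$ maps $|Z|_kV$ onto $V_{k+1}$ and $Z_k^*$ maps $V_{k+1}$ onto $|Z|_kV$, and both maps are isometric isomorphisms.
   Context: Fix integers $N\ge 2$ and $n_1\ge n_2\ge\dots\ge n_N\ge 1$. Let $\mathcal H$ be a finite-dimensional complex Hilbert space with orthonormal basis $\{|-\rangle,|+\rangle\}\cup\{|a_k\rangle:1\le k\le N,\ 0\le a\le n_k-1\}$. For vectors $x,y$, $|x\rangle\langle y|$ denotes the operator $u\mapsto\langle y,u\rangle x$. Put $E_k=\mathrm{span}\{|a_k\rangle:0\le a\le n_k-1\}$, $P_k$ the orthogonal projection onto $E_k$, $\zeta_k=e^{2\pi i/n_k}$, and $\varphi_{a_k}=n_k^{-1/2}\sum_{b=0}^{n_k-1}\zeta_k^{-ba}|b_k\rangle$ for $0\le a\le n_k-1$. For $1\le k\le N-1$ let $Z_k=n_k^{-1/2}\sum_{b=0}^{n_{k+1}-1}\sum_{a=0}^{n_k-1}\zeta_k^{ba}|b_{k+1}\rangle\langle a_k|$ (an operator on $\mathcal H$), $|Z|_k=Z_k^*Z_k$, and $Z=\sum_{k=1}^{N-1}Z_k$. $V$ is the orthogonal complement of the set $\{|-\rangle,|+\rangle,Z^n\varphi_{0_1},Z^{*n}\varphi_{0_N},Z^{*s}\varphi_{0_{2m+1}}:0\le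 n\le N-1,\ 1\le m\le (N-1)/2,\ 1\le s\le 2m\}$, and $V_k=P_kV$ for $k=1,\dots,N$. *)

theory Defs
  imports Complex_Main
begin

(* Orthonormal basis labels: Mn = |->, Pl = |+>, Bs a k = |a_k> *)
datatype bidx = Mn | Pl | Bs nat nat

type_synonym hvec = "bidx \<Rightarrow> complex"
type_synonym hmat = "bidx \<Rightarrow> bidx \<Rightarrow> complex"

definition Idx :: "nat \<Rightarrow> (nat \<Rightarrow> nat) \<Rightarrow> bidx set" where
  "Idx N n = {Mn, Pl} \<union> {Bs a k | a k. 1 \<le> k \<and> k \<le> N \<and> a < n k}"

definition Hsp :: "nat \<Rightarrow> (nat \<Rightarrow> nat) \<Rightarrow> hvec set" where
  "Hsp N n = {x. \<forall>i. i \<notin> Idx N n \<longrightarrow> x i = 0}"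

definition hinner :: "nat \<Rightarrow> (nat \<Rightarrow> nat) \<Rightarrow> hvec \<Rightarrow> hvec \<Rightarrow> complex" where
  "hinner N n x y = (\<Sum>i\<in>Idx N n. cnj (x i) * y i)"

definition hnorm :: "nat \<Rightarrow> (nat \<Rightarrow> nat) \<Rightarrow> hvec \<Rightarrow> real" where
  "hnorm N n x = sqrt (Re (hinner N n x x))"

definition ket :: "bidx \<Rightarrow> hvec" where
  "ket i = (\<lambda>j. if j = i then 1 else 0)"

(* matrix of the operator |x><y| : u \<mapsto> <y,u> x *)
definition ketbra :: "hvec \<Rightarrow> hvec \<Rightarrow> hmat" where
  "ketbra x y = (\<lambda>i j. x i * cnj (y j))"

definition mapply :: "nat \<Rightarrow> (nat \<Rightarrow> nat) \<Rightarrow> hmat \<Rightarrow> hvec \<Rightarrow> hvec" where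
  "mapply N n M x = (\<lambda>i. \<Sum>j\<in>Idx N n. M i j * x j)"

definition adj :: "hmat \<Rightarrow> hmat" where
  "adj M = (\<lambda>i j. cnj (M j i))"

definition mmult :: "nat \<Rightarrow> (nat \<Rightarrow> nat) \<Rightarrow> hmat \<Rightarrow> hmat \<Rightarrow> hmat" where
  "mmult N n A B = (\<lambda>i j. \<Sum>l\<in>Idx N n. A i l * B l j)"

definition zeta :: "(nat \<Rightarrow> nat) \<Rightarrow> nat \<Rightarrow> complex" where
  "zeta n k = cis (2 * pi / real (n k))"

definition phi :: "(nat \<Rightarrow> nat) \<Rightarrow> nat \<Rightarrow> nat \<Rightarrow> hvec" where
  "phi n a k = (\<lambda>i. \<Sum>b<n k. complex_of_real (1 / sqrt (real (n k)))
                        * inverse (zeta n k ^ (b * a)) * ket (Bs b k) i)"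

definition Zk :: "(nat \<Rightarrow> nat) \<Rightarrow> nat \<Rightarrow> hmat" where
  "Zk n k = (\<lambda>i j. \<Sum>b<n (Suc k). \<Sum>a<n k. complex_of_real (1 / sqrt (real (n k)))
               * zeta n k ^ (b * a) * ketbra (ket (Bs b (Suc k))) (ket (Bs a k)) i j)"

definition absZ :: "nat \<Rightarrow> (nat \<Rightarrow> nat) \<Rightarrow> nat \<Rightarrow> hmat" where
  "absZ N n k = mmult N n (adj (Zk n k)) (Zk n k)"

definition Zop :: "nat \<Rightarrow> (nat \<Rightarrow> nat) \<Rightarrow> hmat" where
  "Zop N n = (\<lambda>i j. \<Sum>k\<in>{1..N-1}. Zk n k i j)"

definition Zpow :: "nat \<Rightarrow> (nat \<Rightarrow> nat) \<Rightarrow> nat \<Rightarrow> hvec \<Rightarrow> hvec" where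
  "Zpow N n m = (mapply N n (Zop N n)) ^^ m"

definition Zadjpow :: "nat \<Rightarrow> (nat \<Rightarrow> nat) \<Rightarrow> nat \<Rightarrow> hvec \<Rightarrow> hvec" where
  "Zadjpow N n m = (mapply N n (adj (Zop N n))) ^^ m"

definition Sset :: "nat \<Rightarrow> (nat \<Rightarrow> nat) \<Rightarrow> hvec set" where
  "Sset N n = {ket Mn, ket Pl}
     \<union> {Zpow N n m (phi n 0 1) | m. m \<le> N - 1}
     \<union> {Zadjpow N n m (phi n 0 N) | m. m \<le> N - 1}
     \<union> {Zadjpow N n s (phi n 0 (2 * m + 1)) | m s. 1 \<le> m \<and> 2 * m \<le> N - 1 \<and> 1 \<le> s \<and> s \<le> 2 * m}"

definition Vsp :: "nat \<Rightarrow> (nat \<Rightarrow> nat) \<Rightarrow> hvec set" where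
  "Vsp N n = {x \<in> Hsp N n. \<forall>s\<in>Sset N n. hinner N n s x = 0}"

definition Proj :: "nat \<Rightarrow> hvec \<Rightarrow> hvec" where
  "Proj k x = (\<lambda>i. case i of Bs a k' \<Rightarrow> (if k' = k then x i else 0) | _ \<Rightarrow> 0)"

definition Vk :: "nat \<Rightarrow> (nat \<Rightarrow> nat) \<Rightarrow> nat \<Rightarrow> hvec set" where
  "Vk N n k = Proj k ` Vsp N n"

definition is_direct_sum :: "hvec set \<Rightarrow> (nat \<Rightarrow> hvec set) \<Rightarrow> nat set \<Rightarrow> bool" where
  "is_direct_sum W A J \<longleftrightarrow>
     W = {(\<lambda>i. \<Sum>j\<in>J. f j i) | f. \<forall>j\<in>J. f j \<in> A j} \<and>
     (\<forall>f. (\<forall>j\<in>J. f j \<in> A j) \<and> (\<lambda>i. \<Sum>j\<in>J. f j i) = (\<lambda>i. 0) \<longrightarrow> (\<forall>j\<in>J. f j = (\<lambda>i. 0)))"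

end

theory Submission
  imports Defs
begin

lemma rou_orth:
  assumes m: "m > 0" and b: "b < m" and b': "b' < m"
  shows "(\<Sum>a<m. cis (2*pi/m)^(b*a) * cnj (cis (2*pi/m)^(b'*a))) = (if b = b' then of_nat m else 0)"
proof -
  define z where "z = cis (2*pi/m)"
  define w where "w = z^b * cnj z ^ b'"
  have zn: "z ^ m = 1" using m by (simp add: z_def DeMoivre)
  have cz: "cnj z * z = 1" by (simp add: z_def cis_cnj cis_mult)
  have cz': "cnj z ^ m = 1" using zn by (metis complex_cnj_one complex_cnj_power)
  have eq: "\<And>a. cis (2*pi/m)^(b*a) * cnj (cis (2*pi/m)^(b'*a)) = w ^ a"
    by (simp add: w_def z_def power_mult power_mult_distrib)
  have wm: "w ^ m = 1"
    by (simp add: w_def power_mult_distrib flip: power_mult) (simp add: power_mult mult.commute[of _ m] zn cz')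
  have S: "(\<Sum>a<m. cis (2*pi/m)^(b*a) * cnj (cis (2*pi/m)^(b'*a))) = (\<Sum>a<m. w^a)"
    by (rule sum.cong[OF refl eq])
  show ?thesis
  proof (cases "b = b'")
    case True
    then have "w = 1" by (simp add: w_def flip: power_mult_distrib) (simp add: mult.commute[of z] cz)
    then show ?thesis using True S by simp
  next
    case False
    have "w \<noteq> 1"
    proof
      assume "w = 1"
      then have "z^b * cnj z ^ b' * z ^ b' = z ^ b'" by (simp add: w_def)
      then have "z^b = z^b'" by (simp add: mult.assoc flip: power_mult_distrib add: cz)
      then have "cis (2 * pi * real b / real m) = cis (2 * pi * real b' / real m)"
        by (simp add: z_def DeMoivre mult.commute)
      moreover have "inj_on (\<lambda>k. cis (2 * pi * real k / real m)) {..<m}"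
        using bij_betw_roots_unity[OF m] by (simp add: bij_betw_def)
      ultimately show False using b b' False by (auto dest: inj_onD)
    qed
    then show ?thesis using False S by (simp add: sum_gp_strict wm)
  qed
qed

definition cc :: "(nat \<Rightarrow> nat) \<Rightarrow> nat \<Rightarrow> complex" where
  "cc n k = complex_of_real (1 / sqrt (real (n k)))"

lemma cnj_cc[simp]: "cnj (cc n k) = cc n k" by (simp add: cc_def)

lemma cc_sq: "n k > 0 \<Longrightarrow> cc n k * cc n k * of_nat (n k) = 1"
proof -
  assume "n k > 0"
  then have "(1 / sqrt (real (n k))) * (1 / sqrt (real (n k))) * real (n k) = 1"
    by (simp add: field_simps)
  moreover have "cc n k * cc n k * of_nat (n k) = complex_of_real ((1 / sqrt (real (n k))) * (1 / sqrt (real (n k))) * real (n k))"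
    by (simp only: cc_def of_real_mult of_real_of_nat_eq)
  ultimately show ?thesis by simp
qed

lemma cc_nz: "n k > 0 \<Longrightarrow> cc n k \<noteq> 0" by (simp add: cc_def)

lemma ketbra_ket[simp]: "ketbra (ket x) (ket y) i j = (if i = x \<and> j = y then 1 else 0)"
  by (simp add: ketbra_def ket_def)

lemma Zk_Bs: "Zk n k (Bs b k1) (Bs a k0) =
   (if k1 = Suc k \<and> k0 = k \<and> b < n (Suc k) \<and> a < n k then cc n k * zeta n k ^ (b*a) else 0)"
proof (cases "k1 = Suc k \<and> k0 = k \<and> b < n (Suc k) \<and> a < n k")
  case True
  define X where "X = cc n k * zeta n k ^ (b*a)"
  have "Zk n k (Bs b k1) (Bs a k0) = (\<Sum>b'<n (Suc k). \<Sum>a'<n k.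
      (if b' = b then (if a' = a then X else 0) else 0))"
    unfolding Zk_def cc_def X_def using True
    by (intro sum.cong refl) auto
  also have "\<dots> = (\<Sum>b'<n (Suc k). (if b' = b then X else 0))"
  proof (intro sum.cong refl)
    fix b' show "(\<Sum>a'<n k. (if b' = b then (if a' = a then X else 0) else 0)) = (if b' = b then X else 0)"
      using True by (cases "b' = b") (simp_all add: sum.delta)
  qed
  also have "\<dots> = X" using True by (simp add: sum.delta)
  finally show ?thesis using True by (simp add: X_def)
next
  case False
  have "Zk n k (Bs b k1) (Bs a k0) = (\<Sum>b'<n (Suc k). \<Sum>a'<n k. (0::complex))"
    unfolding Zk_def using False
    by (intro sum.cong refl) auto
  then show ?thesis using False by (simp only: sum.neutral_const if_False)
qed

lemma Zk_other[simp]: "Zk n k Mn j = 0" "Zk n k Pl j = 0" "Zk n k i Mn = 0" "Zk n k i Pl = 0"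
  unfolding Zk_def by auto

lemma Bs_in_Idx[simp]: "Bs a k \<in> Idx N n \<longleftrightarrow> 1 \<le> k \<and> k \<le> N \<and> a < n k"
  by (auto simp: Idx_def)

lemma MnPl_in_Idx[simp]: "Mn \<in> Idx N n" "Pl \<in> Idx N n"
  by (auto simp: Idx_def)

lemma Idx_eq: "Idx N n = {Mn, Pl} \<union> (\<lambda>(k,a). Bs a k) ` (SIGMA k:{1..N}. {..<n k})"
  by (auto simp: Idx_def image_iff)

lemma Idx_fin[simp]: "finite (Idx N n)"
  unfolding Idx_eq by auto

lemma sum_Idx_lvl:
  assumes "1 \<le> k" "k \<le> N" and F0: "\<And>j. j \<in> Idx N n \<Longrightarrow> (\<And>a. j \<noteq> Bs a k) \<Longrightarrow> F j = 0"
  shows "(\<Sum>j\<in>Idx N n. F j) = (\<Sum>a<n k. F (Bs a k))"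
proof -
  have sub: "(\<lambda>a. Bs a k) ` {..<n k} \<subseteq> Idx N n" using assms(1,2) by auto
  have "(\<Sum>j\<in>Idx N n. F j) = (\<Sum>j\<in>(\<lambda>a. Bs a k) ` {..<n k}. F j)"
  proof (rule sum.mono_neutral_right[OF Idx_fin sub], rule ballI)
    fix j assume j: "j \<in> Idx N n - (\<lambda>a. Bs a k) ` {..<n k}"
    then have "\<And>a. j \<noteq> Bs a k" by auto
    then show "F j = 0" using F0 j by blast
  qed
  also have "\<dots> = (\<Sum>a<n k. F (Bs a k))"
    by (subst sum.reindex) (auto simp: inj_on_def)
  finally show ?thesis .
qed

lemma mZk:
  assumes "1 \<le> k" "k \<le> N"
  shows "mapply N n (Zk n k) x = (\<lambda>i. case i of Bs b k1 \<Rightarrow> (if k1 = Suc k \<and> b < n (Suc k)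
      then (\<Sum>a<n k. cc n k * zeta n k^(b*a) * x (Bs a k)) else 0) | _ \<Rightarrow> 0)"
proof
  fix i
  show "mapply N n (Zk n k) x i = (case i of Bs b k1 \<Rightarrow> (if k1 = Suc k \<and> b < n (Suc k)
      then (\<Sum>a<n k. cc n k * zeta n k^(b*a) * x (Bs a k)) else 0) | _ \<Rightarrow> 0)"
  proof (cases i)
    case (Bs b k1)
    have "mapply N n (Zk n k) x i = (\<Sum>a<n k. Zk n k i (Bs a k) * x (Bs a k))"
      unfolding mapply_def
    proof (rule sum_Idx_lvl[OF assms])
      fix j assume "j \<in> Idx N n" "\<And>a. j \<noteq> Bs a k"
      then show "Zk n k i j * x j = 0" using Bs by (cases j) (auto simp: Zk_Bs)
    qed
    also have "\<dots> = (if k1 = Suc k \<and> b < n (Suc k)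
      then (\<Sum>a<n k. cc n k * zeta n k^(b*a) * x (Bs a k)) else 0)"
      using Bs by (auto simp: Zk_Bs intro!: sum.cong)
    finally show ?thesis using Bs by simp
  qed (auto simp: mapply_def)
qed

lemma mZa:
  assumes "1 \<le> k" "Suc k \<le> N"
  shows "mapply N n (adj (Zk n k)) y = (\<lambda>i. case i of Bs a k0 \<Rightarrow> (if k0 = k \<and> a < n k
      then (\<Sum>b<n (Suc k). cc n k * cnj (zeta n k^(b*a)) * y (Bs b (Suc k))) else 0) | _ \<Rightarrow> 0)"
proof
  fix i
  show "mapply N n (adj (Zk n k)) y i = (case i of Bs a k0 \<Rightarrow> (if k0 = k \<and> a < n k
      then (\<Sum>b<n (Suc k). cc n k * cnj (zeta n k^(b*a)) * y (Bs b (Suc k))) else 0) | _ \<Rightarrow> 0)"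
  proof (cases i)
    case (Bs a k0)
    have "mapply N n (adj (Zk n k)) y i = (\<Sum>b<n (Suc k). adj (Zk n k) i (Bs b (Suc k)) * y (Bs b (Suc k)))"
      unfolding mapply_def
    proof (rule sum_Idx_lvl)
      fix j assume "j \<in> Idx N n" "\<And>b. j \<noteq> Bs b (Suc k)"
      then show "adj (Zk n k) i j * y j = 0" using Bs by (cases j) (auto simp: Zk_Bs adj_def)
    qed (use assms in auto)
    also have "\<dots> = (if k0 = k \<and> a < n k
      then (\<Sum>b<n (Suc k). cc n k * cnj (zeta n k^(b*a)) * y (Bs b (Suc k))) else 0)"
      using Bs by (auto simp: Zk_Bs adj_def intro!: sum.cong)
    finally show ?thesis using Bs by simp
  qed (auto simp: mapply_def adj_def)
qed

lemma hinner_adj: "hinner N n (mapply N n M x) y = hinner N n x (mapply N n (adj M) y)"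
proof -
  have "hinner N n (mapply N n M x) y = (\<Sum>i\<in>Idx N n. \<Sum>j\<in>Idx N n. cnj (M i j) * cnj (x j) * y i)"
    unfolding hinner_def mapply_def cnj_sum sum_distrib_right by (intro sum.cong refl) simp
  also have "\<dots> = (\<Sum>j\<in>Idx N n. \<Sum>i\<in>Idx N n. cnj (M i j) * cnj (x j) * y i)"
    by (rule sum.swap)
  also have "\<dots> = hinner N n x (mapply N n (adj M) y)"
    unfolding hinner_def mapply_def adj_def sum_distrib_left by (intro sum.cong refl) simp
  finally show ?thesis .
qed

lemma adj_adj[simp]: "adj (adj M) = M" by (simp add: adj_def)

lemma hinner_adj2: "hinner N n x (mapply N n M y) = hinner N n (mapply N n (adj M) x) y"
  using hinner_adj[of N n "adj M" x y] by simp

lemma hinner_Proj: "hinner N n (Proj k x) y = hinner N n x (Proj k y)"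
  unfolding hinner_def Proj_def by (intro sum.cong refl) (auto split: bidx.split)

lemma mapply_scale: "mapply N n M (\<lambda>i. c * x i) = (\<lambda>i. c * mapply N n M x i)"
  unfolding mapply_def by (simp add: sum_distrib_left mult_ac)

lemma mapply_zero[simp]: "mapply N n M (\<lambda>_. 0) = (\<lambda>_. 0)"
  unfolding mapply_def by simp

lemma mapply_sum: "mapply N n M (\<lambda>i. \<Sum>j\<in>J. f j i) = (\<lambda>i. \<Sum>j\<in>J. mapply N n M (f j) i)"
  unfolding mapply_def sum_distrib_left by (rule ext, rule sum.swap)

lemma hinner_sum: "hinner N n x (\<lambda>i. \<Sum>j\<in>J. f j i) = (\<Sum>j\<in>J. hinner N n x (f j))"
  unfolding hinner_def sum_distrib_left by (rule sum.swap)

lemma hinner_scale: "hinner N n (\<lambda>i. c * x i) y = cnj c * hinner N n x y"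
  unfolding hinner_def by (simp add: sum_distrib_left mult_ac)

lemma hinner_zero[simp]: "hinner N n x (\<lambda>_. 0) = 0" "hinner N n (\<lambda>_. 0) x = 0"
  unfolding hinner_def by simp_all

lemma Proj_Proj: "Proj k (Proj j x) = (if j = k then Proj k x else (\<lambda>_. 0))"
  unfolding Proj_def by (auto split: bidx.split)

lemma Proj_zero[simp]: "Proj k (\<lambda>_. 0) = (\<lambda>_. 0)"
  unfolding Proj_def by (auto split: bidx.split)

lemma Proj_sum: "Proj k (\<lambda>i. \<Sum>j\<in>J. f j i) = (\<lambda>i. \<Sum>j\<in>J. Proj k (f j) i)"
  unfolding Proj_def by (auto split: bidx.split)

lemma Proj_scale: "Proj k (\<lambda>i. c * x i) = (\<lambda>i. c * Proj k x i)"
  unfolding Proj_def by (auto split: bidx.split)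

lemma Proj_Hsp: "x \<in> Hsp N n \<Longrightarrow> Proj k x \<in> Hsp N n"
  unfolding Proj_def Hsp_def by (auto split: bidx.split)

lemma Zk_lvl_out:
  assumes "1 \<le> k" "k \<le> N"
  shows "Proj (Suc k) (mapply N n (Zk n k) x) = mapply N n (Zk n k) x"
  unfolding mZk[OF assms] Proj_def by (auto split: bidx.split)

lemma Zk_lvl_in:
  assumes "1 \<le> k" "k \<le> N"
  shows "mapply N n (Zk n k) (Proj j x) = (if j = k then mapply N n (Zk n k) x else (\<lambda>_. 0))"
  unfolding mZk[OF assms] Proj_def by (auto split: bidx.split)

lemma Zk_Hsp:
  assumes "1 \<le> k" "Suc k \<le> N"
  shows "mapply N n (Zk n k) x \<in> Hsp N n"
  using assms unfolding mZk[OF assms(1) Suc_leD[OF assms(2)]] Hsp_def by (auto split: bidx.split)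

lemma Za_lvl_out:
  assumes "1 \<le> k" "Suc k \<le> N"
  shows "Proj k (mapply N n (adj (Zk n k)) x) = mapply N n (adj (Zk n k)) x"
  unfolding mZa[OF assms] Proj_def by (auto split: bidx.split)

lemma Za_lvl_in:
  assumes "1 \<le> k" "Suc k \<le> N"
  shows "mapply N n (adj (Zk n k)) (Proj j x) = (if j = Suc k then mapply N n (adj (Zk n k)) x else (\<lambda>_. 0))"
  unfolding mZa[OF assms] Proj_def by (auto split: bidx.split)

lemma Za_Hsp:
  assumes "1 \<le> k" "Suc k \<le> N"
  shows "mapply N n (adj (Zk n k)) x \<in> Hsp N n"
  using assms unfolding mZa[OF assms] Hsp_def by (auto split: bidx.split)

lemma mZop: "mapply N n (Zop N n) x = (\<lambda>i. \<Sum>k\<in>{1..N-1}. mapply N n (Zk n k) x i)"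
  unfolding mapply_def Zop_def sum_distrib_right by (rule ext, rule sum.swap)

lemma adj_Zop: "adj (Zop N n) = (\<lambda>i j. \<Sum>k\<in>{1..N-1}. adj (Zk n k) i j)"
  unfolding adj_def Zop_def by simp

lemma mZaop: "mapply N n (adj (Zop N n)) x = (\<lambda>i. \<Sum>k\<in>{1..N-1}. mapply N n (adj (Zk n k)) x i)"
  unfolding mapply_def adj_Zop sum_distrib_right by (rule ext, rule sum.swap)

lemma sum_single:
  assumes "finite S" "\<And>k. k \<in> S \<Longrightarrow> k \<noteq> j \<Longrightarrow> f k = 0"
  shows "(\<Sum>k\<in>S. f k) = (if j \<in> S then f j else 0)"
proof (cases "j \<in> S")
  case True
  then show ?thesis using assms by (simp add: sum.remove)
next
  case False
  then show ?thesis using assms by (intro trans[OF sum.neutral]) auto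
qed

lemma ZZ_lvl:
  assumes "Proj j x = x"
  shows "mapply N n (Zop N n) x = (if 1 \<le> j \<and> j < N then mapply N n (Zk n j) x else (\<lambda>_. 0))"
proof -
  have z: "\<And>k. k \<in> {1..N-1} \<Longrightarrow> k \<noteq> j \<Longrightarrow> mapply N n (Zk n k) x = (\<lambda>_. 0)"
  proof -
    fix k assume k: "k \<in> {1..N-1}" "k \<noteq> j"
    have "mapply N n (Zk n k) x = mapply N n (Zk n k) (Proj j x)" using assms by simp
    also have "\<dots> = (\<lambda>_. 0)"
      using k by (subst Zk_lvl_in) auto
    finally show "mapply N n (Zk n k) x = (\<lambda>_. 0)" .
  qed
  show ?thesis unfolding mZop
  proof
    fix i
    have "(\<Sum>k\<in>{1..N-1}. mapply N n (Zk n k) x i) = (if j \<in> {1..N-1} then mapply N n (Zk n j) x i else 0)"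
      by (rule sum_single) (auto simp: z)
    then show "(\<Sum>k\<in>{1..N-1}. mapply N n (Zk n k) x i) = (if 1 \<le> j \<and> j < N then mapply N n (Zk n j) x else (\<lambda>_. 0)) i"
      by auto
  qed
qed

lemma ZA_lvl:
  assumes "Proj (Suc j) x = x"
  shows "mapply N n (adj (Zop N n)) x = (if 1 \<le> j \<and> j < N then mapply N n (adj (Zk n j)) x else (\<lambda>_. 0))"
proof -
  have z: "\<And>k. k \<in> {1..N-1} \<Longrightarrow> k \<noteq> j \<Longrightarrow> mapply N n (adj (Zk n k)) x = (\<lambda>_. 0)"
  proof -
    fix k assume k: "k \<in> {1..N-1}" "k \<noteq> j"
    have "mapply N n (adj (Zk n k)) x = mapply N n (adj (Zk n k)) (Proj (Suc j) x)" using assms by simp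
    also have "\<dots> = (\<lambda>_. 0)"
      using k by (subst Za_lvl_in) auto
    finally show "mapply N n (adj (Zk n k)) x = (\<lambda>_. 0)" .
  qed
  show ?thesis unfolding mZaop
  proof
    fix i
    have "(\<Sum>k\<in>{1..N-1}. mapply N n (adj (Zk n k)) x i) = (if j \<in> {1..N-1} then mapply N n (adj (Zk n j)) x i else 0)"
      by (rule sum_single) (auto simp: z)
    then show "(\<Sum>k\<in>{1..N-1}. mapply N n (adj (Zk n k)) x i) = (if 1 \<le> j \<and> j < N then mapply N n (adj (Zk n j)) x else (\<lambda>_. 0)) i"
      by auto
  qed
qed

lemma ZA_lvl1:
  assumes "Proj 1 x = x"
  shows "mapply N n (adj (Zop N n)) x = (\<lambda>_. 0)"
proof -
  have "\<And>k. k \<in> {1..N-1} \<Longrightarrow> mapply N n (adj (Zk n k)) x = (\<lambda>_. 0)"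
  proof -
    fix k assume k: "k \<in> {1..N-1}"
    have "mapply N n (adj (Zk n k)) x = mapply N n (adj (Zk n k)) (Proj 1 x)" using assms by simp
    also have "\<dots> = (\<lambda>_. 0)"
      using k by (subst Za_lvl_in) auto
    finally show "mapply N n (adj (Zk n k)) x = (\<lambda>_. 0)" .
  qed
  then show ?thesis unfolding mZaop by (intro ext) simp
qed

lemma phi0: "phi n 0 k = (\<lambda>i. case i of Bs b k1 \<Rightarrow> (if k1 = k \<and> b < n k then cc n k else 0) | _ \<Rightarrow> 0)"
proof
  fix i show "phi n 0 k i = (case i of Bs b k1 \<Rightarrow> (if k1 = k \<and> b < n k then cc n k else 0) | _ \<Rightarrow> 0)"
  proof (cases i)
    case (Bs b k1)
    have "phi n 0 k i = (\<Sum>b'<n k. if b' = b then (if k1 = k then cc n k else 0) else 0)"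
      unfolding phi_def ket_def cc_def using Bs by (intro sum.cong refl) auto
    also have "\<dots> = (if k1 = k \<and> b < n k then cc n k else 0)" by (simp add: sum.delta)
    finally show ?thesis using Bs by simp
  qed (auto simp: phi_def ket_def)
qed

locale L =
  fixes N :: nat and n :: "nat \<Rightarrow> nat"
  assumes hN: "N \<ge> 2"
    and hmono: "\<And>j. 1 \<le> j \<Longrightarrow> j < N \<Longrightarrow> n (Suc j) \<le> n j"
    and hpos: "n N \<ge> 1"
begin

lemma npos: assumes "1 \<le> k" "k \<le> N" shows "0 < n k"
  using assms(2)
proof (induction rule: inc_induct)
  case base then show ?case using hpos by simp
next
  case (step m)
  then show ?case using hmono[of m] assms(1) by simp
qed

lemma ZZa:
  assumes k: "1 \<le> k" "Suc k \<le> N" and y: "y \<in> Hsp N n"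
  shows "mapply N n (Zk n k) (mapply N n (adj (Zk n k)) y) = Proj (Suc k) y"
proof
  fix i
  have nk: "0 < n k" using npos k by simp
  have nsk: "n (Suc k) \<le> n k" using hmono k by simp
  show "mapply N n (Zk n k) (mapply N n (adj (Zk n k)) y) i = Proj (Suc k) y i"
  proof (cases i)
    case (Bs b k1)
    show ?thesis
    proof (cases "k1 = Suc k \<and> b < n (Suc k)")
      case True
      define z where "z = zeta n k"
      define c where "c = cc n k"
      have "mapply N n (Zk n k) (mapply N n (adj (Zk n k)) y) i =
        (\<Sum>a<n k. c * z^(b*a) * (\<Sum>b'<n (Suc k). c * cnj (z^(b'*a)) * y (Bs b' (Suc k))))"
        unfolding mZk[OF k(1) Suc_leD[OF k(2)]] mZa[OF k] using Bs True
        by (simp add: z_def c_def)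
      also have "\<dots> = (\<Sum>a<n k. \<Sum>b'<n (Suc k). (c * c) * (z^(b*a) * cnj (z^(b'*a))) * y (Bs b' (Suc k)))"
        by (simp add: sum_distrib_left mult_ac)
      also have "\<dots> = (\<Sum>b'<n (Suc k). (c * c) * (\<Sum>a<n k. z^(b*a) * cnj (z^(b'*a))) * y (Bs b' (Suc k)))"
        by (subst sum.swap) (simp add: sum_distrib_left sum_distrib_right)
      also have "\<dots> = (\<Sum>b'<n (Suc k). (c * c) * (if b = b' then of_nat (n k) else 0) * y (Bs b' (Suc k)))"
      proof (intro sum.cong refl)
        fix b' assume "b' \<in> {..<n (Suc k)}"
        then have "(\<Sum>a<n k. z^(b*a) * cnj (z^(b'*a))) = (if b = b' then of_nat (n k) else 0)"
          unfolding z_def zeta_def using rou_orth[OF nk, of b b'] True nsk by auto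
        then show "(c * c) * (\<Sum>a<n k. z^(b*a) * cnj (z^(b'*a))) * y (Bs b' (Suc k)) =
           (c * c) * (if b = b' then of_nat (n k) else 0) * y (Bs b' (Suc k))" by simp
      qed
      also have "\<dots> = c * c * of_nat (n k) * y (Bs b (Suc k))"
        using True by (simp add: if_distrib[of "\<lambda>t. c * c * t * _"] sum.delta cong: if_cong)
      also have "\<dots> = y (Bs b (Suc k))" using cc_sq[of n k] nk by (simp add: c_def)
      finally show ?thesis using Bs True by (simp add: Proj_def)
    next
      case False
      have "Proj (Suc k) y i = 0"
      proof (cases "k1 = Suc k")
        case True
        then have "i \<notin> Idx N n" using False Bs by simp
        then have "y i = 0" using y unfolding Hsp_def by blast
        then show ?thesis using True by (simp add: Proj_def Bs)
      qed (simp add: Proj_def Bs)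
      then show ?thesis
        unfolding mZk[OF k(1) Suc_leD[OF k(2)]] using Bs False by auto
    qed
  qed (auto simp: mZk[OF k(1) Suc_leD[OF k(2)]] Proj_def)
qed

lemma Z_phi:
  assumes k: "1 \<le> k" "Suc k \<le> N"
  shows "mapply N n (Zk n k) (phi n 0 k) = ket (Bs 0 (Suc k))"
proof
  fix i
  have nk: "0 < n k" using npos k by simp
  have nsk0: "0 < n (Suc k)" using npos k by simp
  have nsk: "n (Suc k) \<le> n k" using hmono k by simp
  show "mapply N n (Zk n k) (phi n 0 k) i = ket (Bs 0 (Suc k)) i"
  proof (cases "\<exists>b. i = Bs b (Suc k) \<and> b < n (Suc k)")
    case True
    then obtain b where b: "i = Bs b (Suc k)" "b < n (Suc k)" by blast
    have "mapply N n (Zk n k) (phi n 0 k) i = (\<Sum>a<n k. cc n k * cc n k * (zeta n k^(b*a) * cnj (zeta n k^(0*a))))"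
      unfolding mZk[OF k(1) Suc_leD[OF k(2)]] phi0 using b by (simp add: mult_ac)
    also have "\<dots> = cc n k * cc n k * (if b = 0 then of_nat (n k) else 0)"
      unfolding sum_distrib_left[symmetric] zeta_def using rou_orth[OF nk, of b 0] b nsk nk by simp
    also have "\<dots> = ket (Bs 0 (Suc k)) i" using cc_sq[of n k] nk b by (simp add: ket_def)
    finally show ?thesis .
  next
    case False
    then show ?thesis unfolding mZk[OF k(1) Suc_leD[OF k(2)]] ket_def using nsk0
      by (auto split: bidx.split)
  qed
qed

lemma Z_ket:
  assumes k: "1 \<le> k" "Suc k \<le> N"
  shows "mapply N n (Zk n k) (ket (Bs 0 k)) = (\<lambda>i. (cc n k / cc n (Suc k)) * phi n 0 (Suc k) i)"
proof
  fix i
  have nk: "0 < n k" using npos k by simp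
  have nsk0: "0 < n (Suc k)" using npos k by simp
  show "mapply N n (Zk n k) (ket (Bs 0 k)) i = (cc n k / cc n (Suc k)) * phi n 0 (Suc k) i"
    unfolding mZk[OF k(1) Suc_leD[OF k(2)]] phi0 ket_def using nk cc_nz[of n "Suc k"] nsk0
    by (auto split: bidx.split simp: sum.delta[where 'b=complex] if_distrib[of "\<lambda>t. _ * t"] cong: if_cong)
qed

lemma Za_ket:
  assumes k: "1 \<le> k" "Suc k \<le> N"
  shows "mapply N n (adj (Zk n k)) (ket (Bs 0 (Suc k))) = phi n 0 k"
proof
  fix i
  have nk: "0 < n k" using npos k by simp
  have nsk0: "0 < n (Suc k)" using npos k by simp
  show "mapply N n (adj (Zk n k)) (ket (Bs 0 (Suc k))) i = phi n 0 k i"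
    unfolding mZa[OF k] phi0 ket_def using nk nsk0
    by (auto split: bidx.split simp: sum.delta[where 'b=complex] if_distrib[of "\<lambda>t. _ * t"] cong: if_cong)
qed

lemma phi_Hsp: "1 \<le> k \<Longrightarrow> k \<le> N \<Longrightarrow> phi n 0 k \<in> Hsp N n"
  unfolding phi0 Hsp_def by (auto split: bidx.split)

lemma phi_lvl: "Proj k (phi n 0 k) = phi n 0 k"
  unfolding phi0 Proj_def by (auto split: bidx.split)

lemma ket_Hsp: "1 \<le> k \<Longrightarrow> k \<le> N \<Longrightarrow> ket (Bs 0 k) \<in> Hsp N n"
  using npos unfolding ket_def Hsp_def by auto

lemma ket_lvl: "Proj k (ket (Bs 0 k)) = ket (Bs 0 k)"
  unfolding ket_def Proj_def by (auto split: bidx.split)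

lemma Zk_ketMP:
  assumes "1 \<le> k" "Suc k \<le> N"
  shows "mapply N n (Zk n k) (ket Mn) = (\<lambda>_. 0)" "mapply N n (Zk n k) (ket Pl) = (\<lambda>_. 0)"
        "mapply N n (adj (Zk n k)) (ket Mn) = (\<lambda>_. 0)" "mapply N n (adj (Zk n k)) (ket Pl) = (\<lambda>_. 0)"
  unfolding mZk[OF assms(1) Suc_leD[OF assms(2)]] mZa[OF assms] ket_def by (auto split: bidx.split)

definition lvl :: "nat \<Rightarrow> hvec \<Rightarrow> bool" where
  "lvl d x \<longleftrightarrow> x \<in> Hsp N n \<and> Proj d x = x"

lemma lvl_scale: "lvl d x \<Longrightarrow> lvl d (\<lambda>i. c * x i)"
  unfolding lvl_def Hsp_def by (simp add: Proj_scale)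

lemma Zpow_Suc: "Zpow N n (Suc j) x = mapply N n (Zop N n) (Zpow N n j x)"
  by (simp add: Zpow_def)

lemma Zadjpow_Suc: "Zadjpow N n (Suc j) x = mapply N n (adj (Zop N n)) (Zadjpow N n j x)"
  by (simp add: Zadjpow_def)

definition beta :: "nat \<Rightarrow> hvec" where
  "beta j = (if even j then phi n 0 (Suc j) else ket (Bs 0 (Suc j)))"

lemma alpha: "j \<le> N - 1 \<Longrightarrow> \<exists>c. c \<noteq> 0 \<and> Zpow N n j (phi n 0 1) = (\<lambda>i. c * beta j i)"
proof (induction j)
  case 0
  show ?case by (intro exI[of _ 1]) (simp add: Zpow_def beta_def)
next
  case (Suc j)
  then obtain c where c: "c \<noteq> 0" "Zpow N n j (phi n 0 1) = (\<lambda>i. c * beta j i)" by auto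
  have j: "1 \<le> Suc j" "Suc (Suc j) \<le> N" using Suc.prems hN by auto
  have lv: "Proj (Suc j) (beta j) = beta j" by (simp add: beta_def phi_lvl ket_lvl)
  have Zb: "mapply N n (Zop N n) (beta j) = mapply N n (Zk n (Suc j)) (beta j)"
    using ZZ_lvl[OF lv] j by simp
  have "Zpow N n (Suc j) (phi n 0 1) = (\<lambda>i. c * mapply N n (Zk n (Suc j)) (beta j) i)"
    unfolding Zpow_Suc c(2) mapply_scale Zb by simp
  show ?case
  proof (cases "even j")
    case True
    then have "mapply N n (Zk n (Suc j)) (beta j) = beta (Suc j)"
      using Z_phi[OF j] by (simp add: beta_def)
    then show ?thesis using c \<open>Zpow N n (Suc j) (phi n 0 1) = _\<close> by auto
  next
    case False
    then have "mapply N n (Zk n (Suc j)) (beta j) = (\<lambda>i. (cc n (Suc j) / cc n (Suc (Suc j))) * beta (Suc j) i)"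
      using Z_ket[OF j] by (simp add: beta_def)
    moreover have "cc n (Suc j) \<noteq> 0" "cc n (Suc (Suc j)) \<noteq> 0" using cc_nz npos j by auto
    ultimately show ?thesis using c \<open>Zpow N n (Suc j) (phi n 0 1) = _\<close>
      by (intro exI[of _ "c * (cc n (Suc j) / cc n (Suc (Suc j)))"]) (auto simp: mult.assoc)
  qed
qed

lemma beta_lvl: "j \<le> N - 1 \<Longrightarrow> lvl (Suc j) (beta j)"
  unfolding lvl_def beta_def using phi_Hsp ket_Hsp phi_lvl ket_lvl hN by auto

lemma alpha_lvl: "j \<le> N - 1 \<Longrightarrow> lvl (Suc j) (Zpow N n j (phi n 0 1))"
  using alpha beta_lvl lvl_scale by metis

lemma adjpow_lvl: "tp \<le> N \<Longrightarrow> t < tp \<Longrightarrow> lvl (tp - t) (Zadjpow N n t (phi n 0 tp))"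
proof (induction t)
  case 0
  then show ?case unfolding lvl_def using phi_Hsp phi_lvl by (simp add: Zadjpow_def)
next
  case (Suc t)
  then have IH: "lvl (Suc (tp - Suc t)) (Zadjpow N n t (phi n 0 tp))"
    by (simp add: Suc_diff_Suc)
  have k: "1 \<le> tp - Suc t" "Suc (tp - Suc t) \<le> N" using Suc.prems by auto
  have "Zadjpow N n (Suc t) (phi n 0 tp) = mapply N n (adj (Zk n (tp - Suc t))) (Zadjpow N n t (phi n 0 tp))"
    unfolding Zadjpow_Suc using ZA_lvl[of "tp - Suc t"] IH k by (auto simp: lvl_def)
  then show ?case unfolding lvl_def using Za_Hsp[OF k] Za_lvl_out[OF k] by simp
qed

lemma Sset_cases:
  assumes "s \<in> Sset N n"
  obtains "s = ket Mn" | "s = ket Pl"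
   | m where "m \<le> N - 1" "s = Zpow N n m (phi n 0 1)"
   | m where "m \<le> N - 1" "s = Zadjpow N n m (phi n 0 N)"
   | m t where "1 \<le> m" "2 * m \<le> N - 1" "1 \<le> t" "t \<le> 2 * m" "s = Zadjpow N n t (phi n 0 (2 * m + 1))"
  using assms unfolding Sset_def by blast

lemma Sset_lvl:
  assumes "s \<in> Sset N n" "s \<noteq> ket Mn" "s \<noteq> ket Pl"
  shows "\<exists>d. lvl d s"
  using assms(1)
proof (cases rule: Sset_cases)
  case (3 m) then show ?thesis using alpha_lvl by blast
next
  case (4 m) then have "lvl (N - m) s" using adjpow_lvl[of N m] hN by auto
  then show ?thesis by blast
next
  case (5 m t) then have "lvl (2*m+1-t) s" using adjpow_lvl[of "2*m+1" t] by auto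
  then show ?thesis by blast
qed (use assms in auto)

lemma Proj_ketMP[simp]: "Proj k (ket Mn) = (\<lambda>_. 0)" "Proj k (ket Pl) = (\<lambda>_. 0)"
  unfolding Proj_def ket_def by (auto split: bidx.split)

lemma V_Hsp: "v \<in> Vsp N n \<Longrightarrow> v \<in> Hsp N n" by (simp add: Vsp_def)

lemma V_perp: "v \<in> Vsp N n \<Longrightarrow> s \<in> Sset N n \<Longrightarrow> hinner N n s v = 0" by (simp add: Vsp_def)

lemma V_Proj: assumes v: "v \<in> Vsp N n" shows "Proj k v \<in> Vsp N n"
proof -
  have "hinner N n s (Proj k v) = 0" if s: "s \<in> Sset N n" for s
  proof (cases "s = ket Mn \<or> s = ket Pl")
    case True
    then show ?thesis by (auto simp: hinner_Proj[symmetric])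
  next
    case False
    then obtain d where d: "lvl d s" using Sset_lvl s by blast
    have ps: "Proj k s = (if d = k then s else (\<lambda>_. 0))"
      using Proj_Proj[of k d s] d unfolding lvl_def by (cases "d = k") auto
    have "hinner N n s (Proj k v) = hinner N n (Proj k s) v"
      by (simp add: hinner_Proj)
    also have "\<dots> = 0" using V_perp[OF v s] ps by simp
    finally show ?thesis .
  qed
  then show ?thesis using v Proj_Hsp by (simp add: Vsp_def)
qed

definition Vl :: "nat \<Rightarrow> hvec set" where
  "Vl k = {x \<in> Vsp N n. Proj k x = x}"

lemma Vk_eq: "Vk N n k = Vl k"
  unfolding Vk_def Vl_def using V_Proj by (auto simp: Proj_Proj image_iff) (metis)

lemma phi_perp:
  assumes v: "v \<in> Vsp N n" and j: "even j" "j \<le> N - 1"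
  shows "hinner N n (phi n 0 (Suc j)) v = 0"
proof -
  obtain c where c: "c \<noteq> 0" "Zpow N n j (phi n 0 1) = (\<lambda>i. c * beta j i)" using alpha j by blast
  have "Zpow N n j (phi n 0 1) \<in> Sset N n" using j unfolding Sset_def by blast
  then have "0 = hinner N n (\<lambda>i. c * beta j i) v" using V_perp[OF v] c by simp
  also have "\<dots> = cnj c * hinner N n (phi n 0 (Suc j)) v" using j by (simp add: hinner_scale beta_def)
  finally show ?thesis using c by simp
qed

lemma Za_zero_lvl:
  assumes k: "1 \<le> k" "Suc k \<le> N" and "lvl d s" "d \<noteq> Suc k"
  shows "mapply N n (adj (Zk n k)) s = (\<lambda>_. 0)"
  using Za_lvl_in[OF k, where j=d and x=s] assms(3,4) by (simp add: lvl_def)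

lemma Za_eq_ZA:
  assumes k: "1 \<le> k" "Suc k \<le> N" and "lvl (Suc k) s"
  shows "mapply N n (adj (Zk n k)) s = mapply N n (adj (Zop N n)) s"
  using ZA_lvl[of k s] assms by (simp add: lvl_def)

lemma Zk_zero_lvl:
  assumes k: "1 \<le> k" "Suc k \<le> N" and "lvl d s" "d \<noteq> k"
  shows "mapply N n (Zk n k) s = (\<lambda>_. 0)"
  using Zk_lvl_in[OF k(1) Suc_leD[OF k(2)], where j=d and x=s] assms(3,4) by (simp add: lvl_def)

lemma Zk_eq_ZZ:
  assumes k: "1 \<le> k" "Suc k \<le> N" and "lvl k s"
  shows "mapply N n (Zk n k) s = mapply N n (Zop N n) s"
  using ZZ_lvl[of k s] assms by (simp add: lvl_def)

lemma Zadjpow_1: "Zadjpow N n 1 x = mapply N n (adj (Zop N n)) x"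
  by (simp add: Zadjpow_def)

lemma Sset_I3: "m \<le> N - 1 \<Longrightarrow> Zpow N n m (phi n 0 1) \<in> Sset N n"
  unfolding Sset_def by blast
lemma Sset_I4: "m \<le> N - 1 \<Longrightarrow> Zadjpow N n m (phi n 0 N) \<in> Sset N n"
  unfolding Sset_def by blast
lemma Sset_I5: "1 \<le> m \<Longrightarrow> 2 * m \<le> N - 1 \<Longrightarrow> 1 \<le> t \<Longrightarrow> t \<le> 2 * m \<Longrightarrow> Zadjpow N n t (phi n 0 (2 * m + 1)) \<in> Sset N n"
  unfolding Sset_def by blast

lemma MainSub:
  assumes k: "1 \<le> k" "Suc k \<le> N" and x: "x \<in> Vl k"
  shows "mapply N n (Zk n k) x \<in> Vl (Suc k)"
proof -
  let ?y = "mapply N n (Zk n k) x"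
  have xV: "x \<in> Vsp N n" using x by (simp add: Vl_def)
  have "hinner N n s ?y = 0" if s: "s \<in> Sset N n" for s
  proof -
    have e: "hinner N n s ?y = hinner N n (mapply N n (adj (Zk n k)) s) x" by (rule hinner_adj2)
    from s show ?thesis
    proof (cases rule: Sset_cases)
      case 1 then show ?thesis using e Zk_ketMP[OF k] by simp
    next
      case 2 then show ?thesis using e Zk_ketMP[OF k] by simp
    next
      case (3 m)
      have lv: "lvl (Suc m) s" using 3 alpha_lvl by simp
      show ?thesis
      proof (cases "m = k")
        case False then show ?thesis using e Za_zero_lvl[OF k lv] by simp
      next
        case True
        have kN: "k \<le> N - 1" using k by simp
        obtain c where c: "c \<noteq> 0" "Zpow N n k (phi n 0 1) = (\<lambda>i. c * beta k i)" using alpha[OF kN] by blast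
        have bl: "lvl (Suc k) (beta k)" using beta_lvl k by simp
        have "mapply N n (adj (Zk n k)) s = (\<lambda>i. c * mapply N n (adj (Zk n k)) (beta k) i)"
          using 3 True c by (simp add: mapply_scale)
        then have e2: "hinner N n s ?y = cnj c * hinner N n (mapply N n (adj (Zk n k)) (beta k)) x"
          using e by (simp add: hinner_scale)
        show ?thesis
        proof (cases "even k")
          case True
          then obtain m' where m': "k = 2 * m'" by blast
          have "mapply N n (adj (Zk n k)) (beta k) = Zadjpow N n 1 (phi n 0 (2 * m' + 1))"
            using Za_eq_ZA[OF k bl] True m' by (simp add: beta_def Zadjpow_def)
          moreover have "Zadjpow N n 1 (phi n 0 (2 * m' + 1)) \<in> Sset N n"
            using m' k True by (intro Sset_I5) auto
          ultimately show ?thesis using e2 V_perp[OF xV] by simp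
        next
          case False
          have "mapply N n (adj (Zk n k)) (beta k) = phi n 0 k"
            using Za_ket[OF k] False by (simp add: beta_def)
          moreover have "hinner N n (phi n 0 (Suc (k - 1))) x = 0"
            using phi_perp[OF xV, of "k - 1"] False k by simp
          ultimately show ?thesis using e2 k by simp
        qed
      qed
    next
      case (4 m)
      have lv: "lvl (N - m) s" using 4 adjpow_lvl[of N m] hN by simp
      show ?thesis
      proof (cases "N - m = Suc k")
        case False then show ?thesis using e Za_zero_lvl[OF k lv] by simp
      next
        case True
        have "mapply N n (adj (Zk n k)) s = Zadjpow N n (Suc m) (phi n 0 N)"
          using Za_eq_ZA[OF k] lv True 4 by (simp add: Zadjpow_Suc)
        moreover have "Zadjpow N n (Suc m) (phi n 0 N) \<in> Sset N n"
          using True k by (intro Sset_I4) auto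
        ultimately show ?thesis using e V_perp[OF xV] by simp
      qed
    next
      case (5 m t)
      have lv: "lvl (2*m+1-t) s" using 5 adjpow_lvl[of "2*m+1" t] by simp
      show ?thesis
      proof (cases "2*m+1-t = Suc k")
        case False then show ?thesis using e Za_zero_lvl[OF k lv] by simp
      next
        case True
        have "mapply N n (adj (Zk n k)) s = Zadjpow N n (Suc t) (phi n 0 (2*m+1))"
          using Za_eq_ZA[OF k] lv True 5 by (simp add: Zadjpow_Suc)
        moreover have "Zadjpow N n (Suc t) (phi n 0 (2*m+1)) \<in> Sset N n"
          using True 5 k by (intro Sset_I5) auto
        ultimately show ?thesis using e V_perp[OF xV] by simp
      qed
    qed
  qed
  moreover have "?y \<in> Hsp N n" using Zk_Hsp[OF k] .
  moreover have "Proj (Suc k) ?y = ?y" using Zk_lvl_out[OF k(1) Suc_leD[OF k(2)]] .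
  ultimately show ?thesis by (simp add: Vl_def Vsp_def)
qed

lemma MainSup:
  assumes k: "1 \<le> k" "Suc k \<le> N" and y: "y \<in> Vl (Suc k)"
  shows "mapply N n (adj (Zk n k)) y \<in> Vl k \<and> mapply N n (Zk n k) (mapply N n (adj (Zk n k)) y) = y"
proof -
  let ?x = "mapply N n (adj (Zk n k)) y"
  have yV: "y \<in> Vsp N n" and yP: "Proj (Suc k) y = y" using y by (auto simp: Vl_def)
  have ZZy: "mapply N n (Zk n k) ?x = y" using ZZa[OF k V_Hsp[OF yV]] yP by simp
  have "hinner N n s ?x = 0" if s: "s \<in> Sset N n" for s
  proof -
    have e: "hinner N n s ?x = hinner N n (mapply N n (Zk n k) s) y"
      using hinner_adj2[of N n s "adj (Zk n k)" y] by simp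
    from s show ?thesis
    proof (cases rule: Sset_cases)
      case 1 then show ?thesis using e Zk_ketMP[OF k] by simp
    next
      case 2 then show ?thesis using e Zk_ketMP[OF k] by simp
    next
      case (3 m)
      have lv: "lvl (Suc m) s" using 3 alpha_lvl by simp
      show ?thesis
      proof (cases "Suc m = k")
        case False then show ?thesis using e Zk_zero_lvl[OF k lv] by simp
      next
        case True
        have "mapply N n (Zk n k) s = mapply N n (Zop N n) s"
          using Zk_eq_ZZ[OF k] lv True by simp
        also have "\<dots> = Zpow N n (Suc m) (phi n 0 1)" using 3 by (simp only: Zpow_Suc)
        finally have "mapply N n (Zk n k) s = Zpow N n (Suc m) (phi n 0 1)" .
        moreover have "Zpow N n (Suc m) (phi n 0 1) \<in> Sset N n"
          using True k by (intro Sset_I3) auto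
        ultimately show ?thesis using e V_perp[OF yV] by simp
      qed
    next
      case (4 m)
      have lv: "lvl (N - m) s" using 4 adjpow_lvl[of N m] hN by simp
      show ?thesis
      proof (cases "N - m = k")
        case False then show ?thesis using e Zk_zero_lvl[OF k lv] by simp
      next
        case True
        then obtain m' where m': "m = Suc m'" using k by (cases m) auto
        define s' where "s' = Zadjpow N n m' (phi n 0 N)"
        have eqk: "N - m' = Suc k" "m' < N" using True m' k by arith+
        have lv': "lvl (Suc k) s'" using adjpow_lvl[of N m'] eqk unfolding s'_def
          by simp
        have "s = mapply N n (adj (Zk n k)) s'"
          using 4 m' Za_eq_ZA[OF k lv'] by (simp add: Zadjpow_Suc s'_def)
        then have "mapply N n (Zk n k) s = s'"
          using ZZa[OF k, of s'] lv' by (simp add: lvl_def)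
        moreover have "s' \<in> Sset N n" unfolding s'_def using 4 m' by (intro Sset_I4) auto
        ultimately show ?thesis using e V_perp[OF yV] by simp
      qed
    next
      case (5 m t)
      have lv: "lvl (2*m+1-t) s" using 5 adjpow_lvl[of "2*m+1" t] by simp
      show ?thesis
      proof (cases "2*m+1-t = k")
        case False then show ?thesis using e Zk_zero_lvl[OF k lv] by simp
      next
        case True
        then obtain t' where t': "t = Suc t'" using 5 by (cases t) auto
        define s' where "s' = Zadjpow N n t' (phi n 0 (2*m+1))"
        have eqk: "2*m+1 - t' = Suc k" "t' < 2*m+1" using True t' k 5 by arith+
        have lv': "lvl (Suc k) s'" using adjpow_lvl[of "2*m+1" t'] eqk 5 unfolding s'_def
          by simp
        have "s = mapply N n (adj (Zk n k)) s'"
          using 5 t' Za_eq_ZA[OF k lv'] by (simp add: Zadjpow_Suc s'_def)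
        then have "mapply N n (Zk n k) s = s'"
          using ZZa[OF k, of s'] lv' by (simp add: lvl_def)
        moreover have "hinner N n s' y = 0"
        proof (cases "t' = 0")
          case True
          then have "s' = phi n 0 (Suc (2*m))" by (simp add: s'_def Zadjpow_def)
          then show ?thesis using phi_perp[OF yV, of "2*m"] 5 by simp
        next
          case False
          then have "s' \<in> Sset N n" unfolding s'_def using 5 t' by (intro Sset_I5) auto
          then show ?thesis using V_perp[OF yV] by simp
        qed
        ultimately show ?thesis using e by simp
      qed
    qed
  qed
  moreover have "?x \<in> Hsp N n" using Za_Hsp[OF k] .
  moreover have "Proj k ?x = ?x" using Za_lvl_out[OF k] .
  ultimately show ?thesis using ZZy by (simp add: Vl_def Vsp_def)
qed

lemma MainEq:
  assumes k: "1 \<le> k" "Suc k \<le> N"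
  shows "mapply N n (Zk n k) ` Vl k = Vl (Suc k)"
proof
  show "mapply N n (Zk n k) ` Vl k \<subseteq> Vl (Suc k)" using MainSub[OF k] by blast
  show "Vl (Suc k) \<subseteq> mapply N n (Zk n k) ` Vl k"
  proof
    fix y assume "y \<in> Vl (Suc k)"
    then show "y \<in> mapply N n (Zk n k) ` Vl k" using MainSup[OF k] by (metis image_eqI)
  qed
qed

lemma Zpow_img:
  assumes "1 \<le> k" "k + j \<le> N"
  shows "Zpow N n j ` Vl k = Vl (k + j)"
  using assms(2)
proof (induction j)
  case 0 then show ?case by (simp add: Zpow_def)
next
  case (Suc j)
  have IH: "Zpow N n j ` Vl k = Vl (k + j)" using Suc by simp
  have kj: "1 \<le> k + j" "Suc (k + j) \<le> N" using Suc.prems assms(1) by auto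
  have "Zpow N n (Suc j) ` Vl k = mapply N n (Zop N n) ` (Zpow N n j ` Vl k)"
    by (simp add: Zpow_Suc image_image)
  also have "\<dots> = mapply N n (Zop N n) ` Vl (k + j)" using IH by simp
  also have "\<dots> = mapply N n (Zk n (k + j)) ` Vl (k + j)"
  proof (rule image_cong[OF refl])
    fix x assume "x \<in> Vl (k + j)"
    then have "lvl (k + j) x" by (simp add: Vl_def lvl_def V_Hsp)
    then show "mapply N n (Zop N n) x = mapply N n (Zk n (k + j)) x"
      using Zk_eq_ZZ[OF kj] by simp
  qed
  also have "\<dots> = Vl (Suc (k + j))" using MainEq[OF kj] .
  finally show ?case by simp
qed

lemma Zpow_zero: "Zpow N n j (\<lambda>_. 0) = (\<lambda>_. 0)"
  by (induction j) (simp_all add: Zpow_Suc, simp add: Zpow_def)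

lemma Zpow_add: "Zpow N n (a + b) x = Zpow N n a (Zpow N n b x)"
  by (simp add: Zpow_def funpow_add)

lemma Zpow_vanish:
  assumes "x \<in> Vl d" "1 \<le> d" "d \<le> N" "N < d + j"
  shows "Zpow N n j x = (\<lambda>_. 0)"
proof -
  have y: "Zpow N n (N - d) x \<in> Vl N" using Zpow_img[of d "N - d"] assms by auto
  then have "Proj N (Zpow N n (N - d) x) = Zpow N n (N - d) x" by (simp add: Vl_def)
  then have z: "mapply N n (Zop N n) (Zpow N n (N - d) x) = (\<lambda>_. 0)" using ZZ_lvl by simp
  have "j = (j - (N - d) - 1) + 1 + (N - d)" using assms by simp
  then have "Zpow N n j x = Zpow N n (j - (N - d) - 1) (Zpow N n 1 (Zpow N n (N - d) x))"
    by (metis Zpow_add)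
  also have "\<dots> = (\<lambda>_. 0)" using z by (simp add: Zpow_def Zpow_zero[unfolded Zpow_def])
  finally show ?thesis .
qed

lemma Zpow_sum: "Zpow N n j (\<lambda>i. \<Sum>l\<in>J. f l i) = (\<lambda>i. \<Sum>l\<in>J. Zpow N n j (f l) i)"
  by (induction j) (simp_all add: Zpow_Suc mapply_sum, simp add: Zpow_def)

lemma Vsp_sum:
  assumes "\<And>j. j \<in> J \<Longrightarrow> f j \<in> Vsp N n"
  shows "(\<lambda>i. \<Sum>j\<in>J. f j i) \<in> Vsp N n"
proof -
  have "(\<lambda>i. \<Sum>j\<in>J. f j i) \<in> Hsp N n"
    using assms V_Hsp unfolding Hsp_def by (auto intro!: sum.neutral)
  moreover have "hinner N n s (\<lambda>i. \<Sum>j\<in>J. f j i) = 0" if "s \<in> Sset N n" for s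
    using V_perp[OF assms that] by (simp add: hinner_sum)
  ultimately show ?thesis by (simp add: Vsp_def)
qed

lemma hinner_ket: "hinner N n (ket Mn) v = v Mn" "hinner N n (ket Pl) v = v Pl"
  unfolding hinner_def ket_def by (simp_all add: if_distrib[of cnj] if_distrib[of "\<lambda>t. t * _"] sum.delta cong: if_cong)

lemma ketMP_S: "ket Mn \<in> Sset N n" "ket Pl \<in> Sset N n" by (simp_all add: Sset_def)

lemma V_decomp:
  assumes v: "v \<in> Vsp N n"
  shows "v = (\<lambda>i. \<Sum>j\<in>{1..N}. Proj j v i)"
proof
  fix i
  show "v i = (\<Sum>j\<in>{1..N}. Proj j v i)"
  proof (cases i)
    case Mn
    then show ?thesis using V_perp[OF v ketMP_S(1)] hinner_ket by (simp add: Proj_def)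
  next
    case Pl
    then show ?thesis using V_perp[OF v ketMP_S(2)] hinner_ket by (simp add: Proj_def)
  next
    case (Bs a k')
    have "(\<Sum>j\<in>{1..N}. Proj j v i) = (if k' \<in> {1..N} then Proj k' v i else 0)"
      by (rule sum_single) (auto simp: Proj_def Bs)
    also have "\<dots> = v i"
    proof (cases "k' \<in> {1..N}")
      case False
      then have "i \<notin> Idx N n" using Bs by auto
      then have "v i = 0" using V_Hsp[OF v] unfolding Hsp_def by blast
      then show ?thesis using False by auto
    qed (simp add: Proj_def Bs)
    finally show ?thesis by simp
  qed
qed

lemma Vl_sub: "Vl j \<subseteq> Vsp N n" by (auto simp: Vl_def)

lemma dsum_unique:
  assumes "finite J" "\<And>j. j \<in> J \<Longrightarrow> Proj (lv j) (f j) = f j" "inj_on lv J"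
    and z: "(\<lambda>i. \<Sum>j\<in>J. f j i) = (\<lambda>i. 0)"
  shows "\<forall>j\<in>J. f j = (\<lambda>i. 0)"
proof
  fix j0 assume j0: "j0 \<in> J"
  have "(\<lambda>i. 0) = Proj (lv j0) (\<lambda>i. \<Sum>j\<in>J. f j i)" using z by simp
  also have "\<dots> = (\<lambda>i. \<Sum>j\<in>J. Proj (lv j0) (f j) i)" by (rule Proj_sum)
  also have "\<dots> = f j0"
  proof
    fix i
    have "(\<Sum>j\<in>J. Proj (lv j0) (f j) i) = (if j0 \<in> J then Proj (lv j0) (f j0) i else 0)"
    proof (rule sum_single[OF assms(1)])
      fix j assume j: "j \<in> J" "j \<noteq> j0"
      then have "lv j \<noteq> lv j0" using assms(3) j0 by (auto dest: inj_onD)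
      then have "Proj (lv j0) (f j) = (\<lambda>_. 0)"
        using Proj_Proj[of "lv j0" "lv j" "f j"] assms(2)[OF j(1)] by simp
      then show "Proj (lv j0) (f j) i = 0" by simp
    qed
    then show "(\<Sum>j\<in>J. Proj (lv j0) (f j) i) = f j0 i" using j0 assms(2)[OF j0] by simp
  qed
  finally show "f j0 = (\<lambda>i. 0)" by simp
qed

lemma part1a:
  assumes "1 \<le> k" "k \<le> N - 1"
  shows "\<forall>j\<in>{1..N-k-1}. Zpow N n j ` Vk N n k = Vk N n (k + j)"
  unfolding Vk_eq
proof
  fix j assume "j \<in> {1..N-k-1}"
  then show "Zpow N n j ` Vl k = Vl (k + j)" using assms by (intro Zpow_img) auto
qed

lemma part1b:
  assumes k: "1 \<le> k" "k \<le> N - 1"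
  shows "is_direct_sum (Zpow N n k ` Vsp N n) (\<lambda>j. Vk N n j) {k+1..N}"
  unfolding is_direct_sum_def Vk_eq
proof (intro conjI allI impI)
  show "Zpow N n k ` Vsp N n = {\<lambda>i. \<Sum>j\<in>{k + 1..N}. f j i |f. \<forall>j\<in>{k + 1..N}. f j \<in> Vl j}"
  proof (intro equalityI subsetI)
    fix w assume "w \<in> Zpow N n k ` Vsp N n"
    then obtain v where v: "v \<in> Vsp N n" "w = Zpow N n k v" by blast
    have PV: "\<And>j. Proj j v \<in> Vl j" using V_Proj[OF v(1)] by (simp add: Vl_def Proj_Proj)
    define g where "g j = Zpow N n k (Proj (j - k) v)" for j
    have "w = Zpow N n k (\<lambda>i. \<Sum>j\<in>{1..N}. Proj j v i)" using V_decomp[OF v(1)] v(2) by simp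
    also have "\<dots> = (\<lambda>i. \<Sum>j\<in>{1..N}. Zpow N n k (Proj j v) i)" by (rule Zpow_sum)
    also have "\<dots> = (\<lambda>i. \<Sum>j\<in>{1..N-k}. Zpow N n k (Proj j v) i)"
    proof
      fix i show "(\<Sum>j\<in>{1..N}. Zpow N n k (Proj j v) i) = (\<Sum>j\<in>{1..N-k}. Zpow N n k (Proj j v) i)"
      proof (rule sum.mono_neutral_right, simp, force, rule ballI)
        fix j assume j: "j \<in> {1..N} - {1..N-k}"
        then show "Zpow N n k (Proj j v) i = 0" using Zpow_vanish[OF PV[of j]] by auto
      qed
    qed
    also have "\<dots> = (\<lambda>i. \<Sum>j\<in>{1+k..(N-k)+k}. g j i)"
      unfolding g_def by (subst sum.shift_bounds_cl_nat_ivl) simp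
    also have "\<dots> = (\<lambda>i. \<Sum>j\<in>{k+1..N}. g j i)" using k by (simp add: add.commute)
    finally have w: "w = (\<lambda>i. \<Sum>j\<in>{k+1..N}. g j i)" .
    have "\<forall>j\<in>{k+1..N}. g j \<in> Vl j"
    proof
      fix j assume j: "j \<in> {k+1..N}"
      have "Zpow N n k ` Vl (j - k) = Vl (j - k + k)" using j by (intro Zpow_img) auto
      then show "g j \<in> Vl j" using j PV[of "j - k"] unfolding g_def by auto
    qed
    then show "w \<in> {\<lambda>i. \<Sum>j\<in>{k + 1..N}. f j i |f. \<forall>j\<in>{k + 1..N}. f j \<in> Vl j}"
      using w by blast
  next
    fix w assume "w \<in> {\<lambda>i. \<Sum>j\<in>{k + 1..N}. f j i |f. \<forall>j\<in>{k + 1..N}. f j \<in> Vl j}"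
    then obtain g where g: "\<forall>j\<in>{k + 1..N}. g j \<in> Vl j" "w = (\<lambda>i. \<Sum>j\<in>{k + 1..N}. g j i)" by blast
    have "\<forall>j0\<in>{1..N-k}. \<exists>x\<in>Vl j0. Zpow N n k x = g (j0 + k)"
    proof
      fix j0 assume j0: "j0 \<in> {1..N-k}"
      have "Zpow N n k ` Vl j0 = Vl (j0 + k)" using j0 by (intro Zpow_img) auto
      moreover have "g (j0 + k) \<in> Vl (j0 + k)" using g(1) j0 by auto
      ultimately show "\<exists>x\<in>Vl j0. Zpow N n k x = g (j0 + k)" by (metis imageE)
    qed
    then obtain f where f: "\<forall>j0\<in>{1..N-k}. f j0 \<in> Vl j0 \<and> Zpow N n k (f j0) = g (j0 + k)"
      by metis
    define v where "v = (\<lambda>i. \<Sum>j0\<in>{1..N-k}. f j0 i)"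
    have vV: "v \<in> Vsp N n" unfolding v_def using f Vl_sub by (intro Vsp_sum) blast
    have "Zpow N n k v = (\<lambda>i. \<Sum>j0\<in>{1..N-k}. Zpow N n k (f j0) i)" unfolding v_def by (rule Zpow_sum)
    also have "\<dots> = (\<lambda>i. \<Sum>j0\<in>{1..N-k}. g (j0 + k) i)" using f by simp
    also have "\<dots> = (\<lambda>i. \<Sum>j\<in>{1+k..(N-k)+k}. g j i)" by (subst sum.shift_bounds_cl_nat_ivl) simp
    also have "\<dots> = w" using k g(2) by (simp add: add.commute)
    finally show "w \<in> Zpow N n k ` Vsp N n" using vV by blast
  qed
next
  fix f :: "nat \<Rightarrow> hvec"
  assume "(\<forall>j\<in>{k + 1..N}. f j \<in> Vl j) \<and> (\<lambda>i. \<Sum>j\<in>{k + 1..N}. f j i) = (\<lambda>i. 0)"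
  then show "\<forall>j\<in>{k + 1..N}. f j = (\<lambda>i. 0)"
    by (intro dsum_unique[where lv = id]) (auto simp: Vl_def)
qed

lemma part1c:
  "is_direct_sum (Vsp N n) (\<lambda>j. Zpow N n j ` Vk N n 1) {0..N-1}"
proof -
  have img: "\<And>j. j \<in> {0..N-1} \<Longrightarrow> Zpow N n j ` Vk N n 1 = Vl (Suc j)"
    unfolding Vk_eq using Zpow_img[of 1] hN by auto
  show ?thesis
    unfolding is_direct_sum_def
  proof (intro conjI allI impI)
    show "Vsp N n = {\<lambda>i. \<Sum>j\<in>{0..N-1}. f j i |f. \<forall>j\<in>{0..N-1}. f j \<in> Zpow N n j ` Vk N n 1}"
    proof (intro equalityI subsetI)
      fix v assume v: "v \<in> Vsp N n"
      have PV: "\<And>j. Proj j v \<in> Vl j" using V_Proj[OF v] by (simp add: Vl_def Proj_Proj)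
      have "v = (\<lambda>i. \<Sum>j\<in>{1..N}. Proj j v i)" by (rule V_decomp[OF v])
      also have "\<dots> = (\<lambda>i. \<Sum>j\<in>{Suc 0..Suc (N-1)}. Proj j v i)" using hN by simp
      also have "\<dots> = (\<lambda>i. \<Sum>j\<in>{0..N-1}. Proj (Suc j) v i)" by (subst sum.shift_bounds_cl_Suc_ivl) simp
      finally have e1: "v = (\<lambda>i. \<Sum>j\<in>{0..N-1}. Proj (Suc j) v i)" .
      have e2: "\<forall>j\<in>{0..N-1}. Proj (Suc j) v \<in> Zpow N n j ` Vk N n 1" using img PV by simp
      have "\<exists>f. v = (\<lambda>i. \<Sum>j\<in>{0..N-1}. f j i) \<and> (\<forall>j\<in>{0..N-1}. f j \<in> Zpow N n j ` Vk N n 1)"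
        by (rule exI[of _ "\<lambda>j. Proj (Suc j) v"]) (use e1 e2 in simp)
      then show "v \<in> {\<lambda>i. \<Sum>j\<in>{0..N-1}. f j i |f. \<forall>j\<in>{0..N-1}. f j \<in> Zpow N n j ` Vk N n 1}"
        by blast
    next
      fix w assume "w \<in> {\<lambda>i. \<Sum>j\<in>{0..N-1}. f j i |f. \<forall>j\<in>{0..N-1}. f j \<in> Zpow N n j ` Vk N n 1}"
      then obtain f where f: "\<forall>j\<in>{0..N-1}. f j \<in> Zpow N n j ` Vk N n 1" "w = (\<lambda>i. \<Sum>j\<in>{0..N-1}. f j i)"
        by blast
      show "w \<in> Vsp N n" unfolding f(2) using f(1) img Vl_sub by (intro Vsp_sum) blast
    qed
  next
    fix f :: "nat \<Rightarrow> hvec"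
    assume "(\<forall>j\<in>{0..N-1}. f j \<in> Zpow N n j ` Vk N n 1) \<and> (\<lambda>i. \<Sum>j\<in>{0..N-1}. f j i) = (\<lambda>i. 0)"
    then show "\<forall>j\<in>{0..N-1}. f j = (\<lambda>i. 0)"
      using img by (intro dsum_unique[where lv = Suc]) (auto simp: Vl_def)
  qed
qed

lemma mapply_mmult: "mapply N n (mmult N n A B) x = mapply N n A (mapply N n B x)"
proof
  fix i
  have "mapply N n (mmult N n A B) x i = (\<Sum>j\<in>Idx N n. \<Sum>l\<in>Idx N n. A i l * B l j * x j)"
    unfolding mapply_def mmult_def sum_distrib_right ..
  also have "\<dots> = (\<Sum>l\<in>Idx N n. \<Sum>j\<in>Idx N n. A i l * B l j * x j)" by (rule sum.swap)
  also have "\<dots> = mapply N n A (mapply N n B x) i"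
    unfolding mapply_def sum_distrib_left by (simp add: mult.assoc)
  finally show "mapply N n (mmult N n A B) x i = mapply N n A (mapply N n B x) i" .
qed

lemma absZ_img:
  assumes k: "1 \<le> k" "Suc k \<le> N"
  shows "mapply N n (absZ N n k) ` Vsp N n = mapply N n (adj (Zk n k)) ` Vl (Suc k)"
proof -
  have "mapply N n (Zk n k) ` Vsp N n = mapply N n (Zk n k) ` Vl k"
  proof (intro equalityI subsetI)
    fix y assume "y \<in> mapply N n (Zk n k) ` Vsp N n"
    then obtain v where v: "v \<in> Vsp N n" "y = mapply N n (Zk n k) v" by blast
    have "Proj k v \<in> Vl k" using V_Proj[OF v(1)] by (simp add: Vl_def Proj_Proj)
    moreover have "y = mapply N n (Zk n k) (Proj k v)" using v(2) Zk_lvl_in[OF k(1) Suc_leD[OF k(2)], where j=k and x=v] by simp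
    ultimately show "y \<in> mapply N n (Zk n k) ` Vl k" by blast
  qed (use Vl_sub in blast)
  also have "\<dots> = Vl (Suc k)" by (rule MainEq[OF k])
  finally have e: "mapply N n (Zk n k) ` Vsp N n = Vl (Suc k)" .
  have "mapply N n (absZ N n k) ` Vsp N n = mapply N n (adj (Zk n k)) ` (mapply N n (Zk n k) ` Vsp N n)"
    by (simp add: absZ_def mapply_mmult image_image)
  then show ?thesis using e by simp
qed

lemma norm_Za:
  assumes k: "1 \<le> k" "Suc k \<le> N" and y: "y \<in> Vl (Suc k)"
  shows "hnorm N n (mapply N n (adj (Zk n k)) y) = hnorm N n y"
proof -
  have "hinner N n (mapply N n (adj (Zk n k)) y) (mapply N n (adj (Zk n k)) y)
      = hinner N n y (mapply N n (Zk n k) (mapply N n (adj (Zk n k)) y))"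
    using hinner_adj[of N n "adj (Zk n k)" y] by simp
  also have "\<dots> = hinner N n y y" using MainSup[OF k y] by simp
  finally show ?thesis by (simp add: hnorm_def)
qed

lemma part2:
  assumes k: "1 \<le> k" "k \<le> N - 1"
  shows "bij_betw (mapply N n (Zk n k)) (mapply N n (absZ N n k) ` Vsp N n) (Vk N n (k + 1))
       \<and> (\<forall>x\<in>mapply N n (absZ N n k) ` Vsp N n. hnorm N n (mapply N n (Zk n k) x) = hnorm N n x)
       \<and> bij_betw (mapply N n (adj (Zk n k))) (Vk N n (k + 1)) (mapply N n (absZ N n k) ` Vsp N n)
       \<and> (\<forall>x\<in>Vk N n (k + 1). hnorm N n (mapply N n (adj (Zk n k)) x) = hnorm N n x)"
proof -
  have k': "1 \<le> k" "Suc k \<le> N" using k hN by auto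
  let ?Zm = "mapply N n (Zk n k)" and ?Za = "mapply N n (adj (Zk n k))"
  have inv: "\<And>y. y \<in> Vl (Suc k) \<Longrightarrow> ?Zm (?Za y) = y" using MainSup[OF k'] by blast
  have A: "mapply N n (absZ N n k) ` Vsp N n = ?Za ` Vl (Suc k)" by (rule absZ_img[OF k'])
  have b1: "bij_betw ?Zm (?Za ` Vl (Suc k)) (Vl (Suc k))"
    unfolding bij_betw_def inj_on_def using inv by (auto simp: image_image)
  have b2: "bij_betw ?Za (Vl (Suc k)) (?Za ` Vl (Suc k))"
    unfolding bij_betw_def inj_on_def using inv by metis
  have n1: "\<forall>x\<in>?Za ` Vl (Suc k). hnorm N n (?Zm x) = hnorm N n x"
    using inv norm_Za[OF k'] by auto
  have n2: "\<forall>x\<in>Vl (Suc k). hnorm N n (?Za x) = hnorm N n x"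
    using norm_Za[OF k'] by auto
  show ?thesis unfolding A Vk_eq using b1 b2 n1 n2 by simp
qed

end

theorem lemma3p13:
  fixes N :: nat and n :: "nat \<Rightarrow> nat" and k :: nat
  assumes hN: "N \<ge> 2"
    and hmono: "\<And>j. 1 \<le> j \<Longrightarrow> j < N \<Longrightarrow> n (Suc j) \<le> n j"
    and hpos: "n N \<ge> 1"
    and hk: "1 \<le> k" "k \<le> N - 1"
  shows "(\<forall>j\<in>{1..N-k-1}. Zpow N n j ` Vk N n k = Vk N n (k + j))
       \<and> is_direct_sum (Zpow N n k ` Vsp N n) (\<lambda>j. Vk N n j) {k+1..N}
       \<and> is_direct_sum (Vsp N n) (\<lambda>j. Zpow N n j ` Vk N n 1) {0..N-1}
       \<and> bij_betw (mapply N n (Zk n k)) (mapply N n (absZ N n k) ` Vsp N n) (Vk N n (k + 1))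
       \<and> (\<forall>x\<in>mapply N n (absZ N n k) ` Vsp N n. hnorm N n (mapply N n (Zk n k) x) = hnorm N n x)
       \<and> bij_betw (mapply N n (adj (Zk n k))) (Vk N n (k + 1)) (mapply N n (absZ N n k) ` Vsp N n)
       \<and> (\<forall>x\<in>Vk N n (k + 1). hnorm N n (mapply N n (adj (Zk n k)) x) = hnorm N n x)"
proof -
  interpret L N n using hN hmono hpos by unfold_locales auto
  show ?thesis using part1a[OF hk] part1b[OF hk] part1c part2[OF hk] by blast
qed

end
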